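(* Let $M=\langle n_1,n_2,n_3\rangle$ be a numerical monoid of embedding dimension three with minimal generators $n_1<n_2<n_3$. Then $L(x+n_1)=L(x)+1$ for all $x\in M$, or $\ell(x+n_3)=\ell(x)+1$ for all $x\in M$.
   Context: $\mathbb{N}$ denotes the nonnegative integers. A numerical monoid is a submonoid of $\mathbb{N}$ with finite complement. For $x\in M$, $\mathsf{Z}(x)=\{(a_1,a_2,a_3)\in\mathbb{N}^3\mid a_1n_1+a_2n_2+a_3n_3=x\}$; $L(x)$ and $\ell(x)$ are the maximum and minimum of $a_1+a_2+a_3$ over $(a_1,a_2,a_3)\in\mathsf{Z}(x)$. *)

theory Defs
  imports Main
begin

definition gen_monoid :: "nat \<Rightarrow> nat \<Rightarrow> nat \<Rightarrow> nat set" where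
  "gen_monoid n1 n2 n3 = {x. \<exists>a1 a2 a3. a1 * n1 + a2 * n2 + a3 * n3 = x}"

definition factorizations :: "nat \<Rightarrow> nat \<Rightarrow> nat \<Rightarrow> nat \<Rightarrow> (nat \<times> nat \<times> nat) set" where
  "factorizations n1 n2 n3 x = {(a1, a2, a3). a1 * n1 + a2 * n2 + a3 * n3 = x}"

definition lengths :: "nat \<Rightarrow> nat \<Rightarrow> nat \<Rightarrow> nat \<Rightarrow> nat set" where
  "lengths n1 n2 n3 x = (\<lambda>(a1, a2, a3). a1 + a2 + a3) ` factorizations n1 n2 n3 x"

definition max_len :: "nat \<Rightarrow> nat \<Rightarrow> nat \<Rightarrow> nat \<Rightarrow> nat" where
  "max_len n1 n2 n3 x = Max (lengths n1 n2 n3 x)"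

definition min_len :: "nat \<Rightarrow> nat \<Rightarrow> nat \<Rightarrow> nat \<Rightarrow> nat" where
  "min_len n1 n2 n3 x = Min (lengths n1 n2 n3 x)"

definition emb_dim_three :: "nat \<Rightarrow> nat \<Rightarrow> nat \<Rightarrow> bool" where
  "emb_dim_three n1 n2 n3 \<longleftrightarrow>
     0 < n1 \<and> n1 < n2 \<and> n2 < n3 \<and>
     finite (UNIV - gen_monoid n1 n2 n3) \<and>
     n2 \<notin> gen_monoid n1 0 0 \<and>
     n3 \<notin> gen_monoid n1 n2 0"

end

theory Submission
  imports Defs
begin

lemma fin_lengths:
  assumes "0 < n1" "0 < n2" "0 < n3"
  shows "finite (lengths n1 n2 n3 x)"
proof -
  have "factorizations n1 n2 n3 x \<subseteq> {..x} \<times> {..x} \<times> {..x}"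
  proof
    fix p assume "p \<in> factorizations n1 n2 n3 x"
    then obtain a1 a2 a3 where p: "p = (a1,a2,a3)" "a1 * n1 + a2 * n2 + a3 * n3 = x"
      unfolding factorizations_def by auto
    have "a1 \<le> a1 * n1" "a2 \<le> a2 * n2" "a3 \<le> a3 * n3" using assms by auto
    moreover have "a1 * n1 \<le> x" "a2 * n2 \<le> x" "a3 * n3 \<le> x" using p(2) by linarith+
    ultimately have "a1 \<le> x" "a2 \<le> x" "a3 \<le> x" by linarith+
    then show "p \<in> {..x} \<times> {..x} \<times> {..x}" using p(1) by simp
  qed
  then have "finite (factorizations n1 n2 n3 x)" by (rule finite_subset) auto
  then show ?thesis unfolding lengths_def by auto
qed

lemma mem_lengths:
  assumes "a1 * n1 + a2 * n2 + a3 * n3 = x"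
  shows "a1 + a2 + a3 \<in> lengths n1 n2 n3 x"
  using assms unfolding lengths_def factorizations_def by force

lemma le_max:
  assumes "0 < n1" "0 < n2" "0 < n3" "a1 * n1 + a2 * n2 + a3 * n3 = x"
  shows "a1 + a2 + a3 \<le> max_len n1 n2 n3 x"
  unfolding max_len_def using fin_lengths[OF assms(1-3)] mem_lengths[OF assms(4)] by auto

lemma ge_min:
  assumes "0 < n1" "0 < n2" "0 < n3" "a1 * n1 + a2 * n2 + a3 * n3 = x"
  shows "min_len n1 n2 n3 x \<le> a1 + a2 + a3"
  unfolding min_len_def using fin_lengths[OF assms(1-3)] mem_lengths[OF assms(4)] by auto

lemma max_ex:
  assumes "0 < n1" "0 < n2" "0 < n3" "x \<in> gen_monoid n1 n2 n3"
  shows "\<exists>a1 a2 a3. a1 * n1 + a2 * n2 + a3 * n3 = x \<and> a1 + a2 + a3 = max_len n1 n2 n3 x"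
proof -
  have ne: "lengths n1 n2 n3 x \<noteq> {}" using assms(4) mem_lengths
    unfolding gen_monoid_def by blast
  have h: "max_len n1 n2 n3 x \<in> lengths n1 n2 n3 x"
    unfolding max_len_def using fin_lengths[OF assms(1-3)] ne by (rule Max_in)
  then obtain p where p: "p \<in> factorizations n1 n2 n3 x" "max_len n1 n2 n3 x = (case p of (a1, a2, a3) \<Rightarrow> a1 + a2 + a3)"
    unfolding lengths_def by blast
  obtain a1 a2 a3 where "p = (a1,a2,a3)" by (cases p) auto
  then show ?thesis using p unfolding factorizations_def by auto
qed

lemma min_ex:
  assumes "0 < n1" "0 < n2" "0 < n3" "x \<in> gen_monoid n1 n2 n3"
  shows "\<exists>a1 a2 a3. a1 * n1 + a2 * n2 + a3 * n3 = x \<and> a1 + a2 + a3 = min_len n1 n2 n3 x"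
proof -
  have ne: "lengths n1 n2 n3 x \<noteq> {}" using assms(4) mem_lengths
    unfolding gen_monoid_def by blast
  have h: "min_len n1 n2 n3 x \<in> lengths n1 n2 n3 x"
    unfolding min_len_def using fin_lengths[OF assms(1-3)] ne by (rule Min_in)
  then obtain p where p: "p \<in> factorizations n1 n2 n3 x" "min_len n1 n2 n3 x = (case p of (a1, a2, a3) \<Rightarrow> a1 + a2 + a3)"
    unfolding lengths_def by blast
  obtain a1 a2 a3 where "p = (a1,a2,a3)" by (cases p) auto
  then show ?thesis using p unfolding factorizations_def by auto
qed

lemma keyL:
  fixes n1 n2 n3 :: nat
  assumes "0<n1" "n1<n2" "n2<n3" "a2*n2 + a3*n3 = C1*n1 + c2*n2 + c3*n3" "C1 \<ge> 1"
    "C1+c2+c3 < a2+a3"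
  shows "\<exists>d1 d2 d3. d2 \<le> a2 \<and> d3 \<ge> 1 \<and> d2*n2 = d1*n1 + d3*n3 \<and> d1+d3 < d2"
proof -
  have "c2 < a2"
  proof (rule ccontr)
    assume "\<not> c2 < a2"
    then obtain k where k: "c2 = a2 + k" using le_Suc_ex by (metis not_less)
    have e1: "a3*n3 = C1*n1 + k*n2 + c3*n3" using assms(4) unfolding k by (simp add: algebra_simps)
    then have "c3*n3 \<le> a3*n3" by linarith
    then have "c3 \<le> a3" using assms by simp
    then obtain m where m: "a3 = c3 + m" using le_Suc_ex by blast
    have e2: "m*n3 = C1*n1 + k*n2" using e1 unfolding m by (simp add: algebra_simps)
    have "C1*n1 < C1*n3" using assms by simp
    moreover have "k*n2 \<le> k*n3" using assms by simp
    moreover have "(C1+k)*n3 = C1*n3 + k*n3" by (simp add: algebra_simps)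
    ultimately have "m*n3 < (C1+k)*n3" using e2 by linarith
    then have "m < C1+k" by (meson mult_less_cancel2)
    then show False using assms(6) k m by linarith
  qed
  then obtain d2 where d2: "a2 = c2 + d2" "d2 > 0" using le_Suc_ex
    by (metis less_imp_add_positive)
  have e3: "d2*n2 + a3*n3 = C1*n1 + c3*n3" using assms(4) unfolding d2 by (simp add: algebra_simps)
  have "a3 < c3"
  proof (rule ccontr)
    assume "\<not> a3 < c3"
    then obtain m where m: "a3 = c3 + m" using le_Suc_ex by (metis not_less)
    have e4: "d2*n2 + m*n3 = C1*n1" using e3 unfolding m by (simp add: algebra_simps)
    have "(d2+m)*n2 \<le> d2*n2 + m*n3" using assms by (simp add: algebra_simps)
    moreover have "C1*n1 < C1*n2" using assms by simp
    ultimately have "(d2+m)*n2 < C1*n2" using e4 by linarith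
    then have "d2+m < C1" by (meson mult_less_cancel2)
    then show False using assms(6) d2 m by linarith
  qed
  then obtain d3 where d3: "c3 = a3 + d3" "d3 > 0"
    by (metis less_imp_add_positive)
  have "d2*n2 = C1*n1 + d3*n3" using e3 unfolding d3 by (simp add: algebra_simps)
  moreover have "C1 + d3 < d2" using assms(6) d2 d3 by linarith
  ultimately show ?thesis using d2 d3 by (intro exI[of _ C1] exI[of _ d2] exI[of _ d3]) auto
qed

lemma keyl:
  fixes n1 n2 n3 :: nat
  assumes "0<n1" "n1<n2" "n2<n3" "b1*n1 + b2*n2 = f1*n1 + f2*n2 + F3*n3" "F3 \<ge> 1"
    "b1+b2 < f1+f2+F3"
  shows "\<exists>e1 e2 e3. e2 \<le> b2 \<and> e1 \<ge> 1 \<and> e2*n2 = e1*n1 + e3*n3 \<and> e2 < e1+e3"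
proof -
  have "f2 < b2"
  proof (rule ccontr)
    assume "\<not> f2 < b2"
    then obtain k where k: "f2 = b2 + k" using le_Suc_ex by (metis not_less)
    have e1: "b1*n1 = f1*n1 + k*n2 + F3*n3" using assms(4) unfolding k by (simp add: algebra_simps)
    then have "f1*n1 \<le> b1*n1" by linarith
    then have "f1 \<le> b1" using assms by simp
    then obtain m where m: "b1 = f1 + m" using le_Suc_ex by blast
    have e2: "m*n1 = k*n2 + F3*n3" using e1 unfolding m by (simp add: algebra_simps)
    have "F3*n1 < F3*n3" using assms by simp
    moreover have "k*n1 \<le> k*n2" using assms by simp
    moreover have "(k+F3)*n1 = k*n1 + F3*n1" by (simp add: algebra_simps)
    ultimately have "(k+F3)*n1 < m*n1" using e2 by linarith
    then have "k+F3 < m" by (meson mult_less_cancel2)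
    then show False using assms(6) k m by linarith
  qed
  then obtain e2 where e2: "b2 = f2 + e2" "e2 > 0"
    by (metis less_imp_add_positive)
  have e3: "b1*n1 + e2*n2 = f1*n1 + F3*n3" using assms(4) unfolding e2 by (simp add: algebra_simps)
  have "b1 < f1"
  proof (rule ccontr)
    assume "\<not> b1 < f1"
    then obtain m where m: "b1 = f1 + m" using le_Suc_ex by (metis not_less)
    have e4: "m*n1 + e2*n2 = F3*n3" using e3 unfolding m by (simp add: algebra_simps)
    have "m*n1 + e2*n2 \<le> (m+e2)*n2" using assms by (simp add: algebra_simps)
    moreover have "(m+e2)*n2 < (m+e2)*n3" using assms e2 by simp
    ultimately have "F3*n3 < (m+e2)*n3" using e4 by linarith
    then have "F3 < m+e2" by (meson mult_less_cancel2)
    then show False using assms(6) e2 m by linarith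
  qed
  then obtain e1 where e1: "f1 = b1 + e1" "e1 > 0"
    by (metis less_imp_add_positive)
  have "e2*n2 = e1*n1 + F3*n3" using e3 unfolding e1 by (simp add: algebra_simps)
  moreover have "e2 < e1 + F3" using assms(6) e1 e2 by linarith
  ultimately show ?thesis using e1 e2 by (intro exI[of _ e1] exI[of _ e2] exI[of _ F3]) auto
qed


theorem mainTheorem9:
  fixes n1 n2 n3 :: nat
  assumes "emb_dim_three n1 n2 n3"
  shows "(\<forall>x \<in> gen_monoid n1 n2 n3. max_len n1 n2 n3 (x + n1) = max_len n1 n2 n3 x + 1)
       \<or> (\<forall>x \<in> gen_monoid n1 n2 n3. min_len n1 n2 n3 (x + n3) = min_len n1 n2 n3 x + 1)"
proof (rule ccontr)
  assume neg: "\<not> ?thesis"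
  have o: "0 < n1" "n1 < n2" "n2 < n3" using assms unfolding emb_dim_three_def by auto
  have p: "0 < n1" "0 < n2" "0 < n3" using o by auto
  obtain x where x: "x \<in> gen_monoid n1 n2 n3" "max_len n1 n2 n3 (x + n1) \<noteq> max_len n1 n2 n3 x + 1"
    using neg by blast
  obtain y where y: "y \<in> gen_monoid n1 n2 n3" "min_len n1 n2 n3 (y + n3) \<noteq> min_len n1 n2 n3 y + 1"
    using neg by blast
  obtain c1 c2 c3 where c: "c1 * n1 + c2 * n2 + c3 * n3 = x" "c1 + c2 + c3 = max_len n1 n2 n3 x"
    using max_ex[OF p x(1)] by blast
  have "(c1+1) * n1 + c2 * n2 + c3 * n3 = x + n1" using c(1) by (simp add: algebra_simps)
  from le_max[OF p this] have "max_len n1 n2 n3 x + 1 \<le> max_len n1 n2 n3 (x + n1)" using c(2) by simp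
  with x(2) have Lgt: "max_len n1 n2 n3 x + 1 < max_len n1 n2 n3 (x + n1)" by simp
  have xn: "x + n1 \<in> gen_monoid n1 n2 n3" using c(1) unfolding gen_monoid_def
    by (intro CollectI exI[of _ "c1+1"] exI[of _ c2] exI[of _ c3]) (simp add: algebra_simps)
  obtain a1 a2 a3 where a: "a1 * n1 + a2 * n2 + a3 * n3 = x + n1" "a1 + a2 + a3 = max_len n1 n2 n3 (x + n1)"
    using max_ex[OF p xn] by blast
  have PA: "g1 + g2 + g3 \<le> max_len n1 n2 n3 x + 1"
    if "g1 \<ge> 1" "g1 * n1 + g2 * n2 + g3 * n3 = x + n1" for g1 g2 g3
  proof -
    define h where "h = g1 - 1"
    have "g1 = h + 1" using that(1) unfolding h_def by simp
    then have "h * n1 + g2 * n2 + g3 * n3 = x" using that(2) by (simp add: algebra_simps)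
    from le_max[OF p this] show ?thesis using \<open>g1 = h + 1\<close> by simp
  qed
  have "a1 = 0"
  proof (rule ccontr)
    assume "a1 \<noteq> 0"
    then have "a1 + a2 + a3 \<le> max_len n1 n2 n3 x + 1" using PA a(1) by simp
    then show False using a(2) Lgt by simp
  qed
  then have aeq: "a2 * n2 + a3 * n3 = (c1+1) * n1 + c2 * n2 + c3 * n3" using a(1) c(1)
    by (simp add: algebra_simps)
  have "(c1+1) + c2 + c3 < a2 + a3" using a(2) c(2) Lgt \<open>a1 = 0\<close> by simp
  from keyL[OF o aeq _ this] obtain d1 d2 d3 where
    d: "d2 \<le> a2" "d3 \<ge> 1" "d2*n2 = d1*n1 + d3*n3" "d1+d3 < d2" by auto
  obtain f1 f2 f3 where f: "f1 * n1 + f2 * n2 + f3 * n3 = y" "f1 + f2 + f3 = min_len n1 n2 n3 y"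
    using min_ex[OF p y(1)] by blast
  have "f1 * n1 + f2 * n2 + (f3+1) * n3 = y + n3" using f(1) by (simp add: algebra_simps)
  from ge_min[OF p this] have "min_len n1 n2 n3 (y + n3) \<le> min_len n1 n2 n3 y + 1" using f(2) by simp
  with y(2) have lt: "min_len n1 n2 n3 (y + n3) < min_len n1 n2 n3 y + 1" by simp
  have yn: "y + n3 \<in> gen_monoid n1 n2 n3" using f(1) unfolding gen_monoid_def
    by (intro CollectI exI[of _ f1] exI[of _ f2] exI[of _ "f3+1"]) (simp add: algebra_simps)
  obtain b1 b2 b3 where b: "b1 * n1 + b2 * n2 + b3 * n3 = y + n3" "b1 + b2 + b3 = min_len n1 n2 n3 (y + n3)"
    using min_ex[OF p yn] by blast
  have PB: "min_len n1 n2 n3 y + 1 \<le> g1 + g2 + g3"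
    if "g3 \<ge> 1" "g1 * n1 + g2 * n2 + g3 * n3 = y + n3" for g1 g2 g3
  proof -
    define h where "h = g3 - 1"
    have "g3 = h + 1" using that(1) unfolding h_def by simp
    then have "g1 * n1 + g2 * n2 + h * n3 = y" using that(2) by (simp add: algebra_simps)
    from ge_min[OF p this] show ?thesis using \<open>g3 = h + 1\<close> by simp
  qed
  have "b3 = 0"
  proof (rule ccontr)
    assume "b3 \<noteq> 0"
    then have "min_len n1 n2 n3 y + 1 \<le> b1 + b2 + b3" using PB b(1) by simp
    then show False using b(2) lt by simp
  qed
  then have beq: "b1 * n1 + b2 * n2 = f1 * n1 + f2 * n2 + (f3+1) * n3" using b(1) f(1)
    by (simp add: algebra_simps)
  have "b1 + b2 < f1 + f2 + (f3+1)" using b(2) f(2) lt \<open>b3 = 0\<close> by simp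
  from keyl[OF o beq _ this] obtain e1 e2 e3 where
    e: "e2 \<le> b2" "e1 \<ge> 1" "e2*n2 = e1*n1 + e3*n3" "e2 < e1+e3" by auto
  have "b2 < d2"
  proof (rule ccontr)
    assume "\<not> b2 < d2"
    define t where "t = b2 - d2"
    have t: "b2 = d2 + t" using \<open>\<not> b2 < d2\<close> unfolding t_def by simp
    have "(b1+d1) * n1 + t * n2 + d3 * n3 = y + n3"
      using b(1) \<open>b3 = 0\<close> d(3) unfolding t by (simp add: algebra_simps)
    from PB[OF d(2) this] show False using b(2) \<open>b3 = 0\<close> lt d(4) t by linarith
  qed
  moreover have "a2 < e2"
  proof (rule ccontr)
    assume "\<not> a2 < e2"
    define t where "t = a2 - e2"
    have t: "a2 = e2 + t" using \<open>\<not> a2 < e2\<close> unfolding t_def by simp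
    have "e1 * n1 + t * n2 + (a3+e3) * n3 = x + n1"
      using a(1) \<open>a1 = 0\<close> e(3) unfolding t by (simp add: algebra_simps)
    from PA[OF e(2) this] show False using a(2) \<open>a1 = 0\<close> Lgt e(4) t by linarith
  qed
  ultimately show False using d(1) e(1) by linarith
qed

end
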